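(* Let $1<k<n$ and let $\psi:(\mathbb{Q}^{n+1})^*\to(\mathbb{Q}^{n+1})^*$ be the linear map with $\psi(x_i)=-x_{k-i}$ for $1\le i<k$, $\psi(x_k)=\sum_{j=1}^{n+1}x_j$, $\psi(x_i)=-x_{n+1-(i-k)}$ for $k<i\le n$, and $\psi(x_{n+1})=-x_{n+1}$. Then $\psi$ is a linear automorphism, the map $\ker\alpha\mapsto\ker\psi(\alpha)$ permutes the hyperplanes of $\mathcal{A}_{A_{n,k}}$, and $\psi\big(\sum_{j=1}^{n+1}x_j\big)=x_k$; in particular this permutation sends $\ker\big(\sum_{j=1}^{n+1}x_j\big)$ to $\ker x_k$.
   Context: For a finite simple graph $G=(N,E)$ with $N=\{1,\dots,n\}$ and $I\subseteq N$, $G[I]$ denotes the induced subgraph on $I$, and $H_I=\ker\big(\sum_{i\in I}x_i\big)$, where $x_1,\dots,x_n$ are the coordinate functions. The connected subgraph arrangement of $G$ is $\mathcal{A}_G=\{H_I:\emptyset\neq I\subseteq N,\ G[I]\text{ connected}\}$ over $\mathbb{Q}$. The almost path $A_{n,k}$ ($1<k<n$) has vertices $1,\dots,n+1$ and edges $\{i,i+1\}$ ($1\le i<n$) and $\{k,n+1\}$. *)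

theory Defs
  imports Complex_Main
begin

text \<open>Points of Q^(n+1): functions nat => rat supported on {1..n+1}.
  Linear forms on Q^(n+1) (elements of the dual space) are represented by their
  coefficient vectors w.r.t. the coordinate functions x_1,...,x_(n+1),
  again functions nat => rat supported on {1..n+1}.\<close>

definition vecs :: "nat \<Rightarrow> (nat \<Rightarrow> rat) set" where
  "vecs m = {v. \<forall>i. i \<notin> {1..m} \<longrightarrow> v i = 0}"

definition coord :: "nat \<Rightarrow> (nat \<Rightarrow> rat)" where
  "coord i = (\<lambda>j. if j = i then 1 else 0)"

definition sum_form :: "nat set \<Rightarrow> (nat \<Rightarrow> rat)" where
  "sum_form I = (\<lambda>j. if j \<in> I then 1 else 0)"

definition ker_form :: "nat \<Rightarrow> (nat \<Rightarrow> rat) \<Rightarrow> (nat \<Rightarrow> rat) set" where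
  "ker_form m a = {v \<in> vecs m. (\<Sum>i=1..m. a i * v i) = 0}"

definition induced_connected :: "nat set set \<Rightarrow> nat set \<Rightarrow> bool" where
  "induced_connected E I \<longleftrightarrow> I \<noteq> {} \<and>
     (\<forall>u\<in>I. \<forall>v\<in>I. (u, v) \<in> {(a, b). a \<in> I \<and> b \<in> I \<and> {a, b} \<in> E}\<^sup>*)"

definition csa :: "nat \<Rightarrow> nat set set \<Rightarrow> (nat \<Rightarrow> rat) set set" where
  "csa m E = {ker_form m (sum_form I) | I. I \<subseteq> {1..m} \<and> induced_connected E I}"

definition almost_path_edges :: "nat \<Rightarrow> nat \<Rightarrow> nat set set" where
  "almost_path_edges n k = {{i, i + 1} | i. 1 \<le> i \<and> i < n} \<union> {{k, n + 1}}"

definition psi_basis :: "nat \<Rightarrow> nat \<Rightarrow> nat \<Rightarrow> (nat \<Rightarrow> rat)" where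
  "psi_basis n k i =
     (if 1 \<le> i \<and> i < k then (\<lambda>j. - coord (k - i) j)
      else if i = k then sum_form {1..n+1}
      else if k < i \<and> i \<le> n then (\<lambda>j. - coord (n + 1 - (i - k)) j)
      else if i = n + 1 then (\<lambda>j. - coord (n + 1) j)
      else (\<lambda>j. 0))"

definition psi :: "nat \<Rightarrow> nat \<Rightarrow> (nat \<Rightarrow> rat) \<Rightarrow> (nat \<Rightarrow> rat)" where
  "psi n k a = (\<lambda>j. \<Sum>i=1..n+1. a i * psi_basis n k i j)"

end

theory Submission
  imports Defs
begin

definition fl :: "nat \<Rightarrow> nat \<Rightarrow> nat \<Rightarrow> nat" where
  "fl n k j = (if j < k then k - j else if j \<le> n then n + 1 + k - j else n + 1)"

lemma fl_props:
  assumes "1 < k" "k < n" "j \<in> {1..n+1}" "j \<noteq> k"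
  shows "fl n k j \<in> {1..n+1}" "fl n k j \<noteq> k" "fl n k (fl n k j) = j"
  using assms by (auto simp: fl_def)

lemma pb_formula:
  assumes "1 < k" "k < n"
  shows "psi_basis n k i j = (if i = k then (if j \<in> {1..n+1} then 1 else 0)
           else if i \<in> {1..n+1} \<and> j = fl n k i then -1 else 0)"
  using assms by (auto simp: psi_basis_def fl_def coord_def sum_form_def)


lemma psi_formula:
  assumes "1 < k" "k < n"
  shows "psi n k a j = (if j \<in> {1..n+1} then a k - (if j \<noteq> k then a (fl n k j) else 0) else 0)"
proof -
  have "psi n k a j = (\<Sum>i=1..n+1. (if i = k then a k * (if j \<in> {1..n+1} then 1 else 0) else 0))
      + (\<Sum>i=1..n+1. (if i = fl n k j \<and> j \<in> {1..n+1} \<and> j \<noteq> k then - a i else 0))"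
    unfolding psi_def sum.distrib[symmetric]
  proof (rule sum.cong[OF refl])
    fix i assume i: "i \<in> {1..n+1}"
    have "(i \<noteq> k \<and> j = fl n k i) = (i = fl n k j \<and> j \<in> {1..n+1} \<and> j \<noteq> k)"
    proof
      assume h: "i \<noteq> k \<and> j = fl n k i"
      then show "i = fl n k j \<and> j \<in> {1..n+1} \<and> j \<noteq> k"
        using fl_props[OF assms i] by simp
    next
      assume h: "i = fl n k j \<and> j \<in> {1..n+1} \<and> j \<noteq> k"
      then show "i \<noteq> k \<and> j = fl n k i"
        using fl_props[OF assms, of j] by simp
    qed
    then show "a i * psi_basis n k i j = (if i = k then a k * (if j \<in> {1..n+1} then 1 else 0) else 0)
      + (if i = fl n k j \<and> j \<in> {1..n+1} \<and> j \<noteq> k then - a i else 0)"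
      using i unfolding pb_formula[OF assms] by auto
  qed
  also have "(\<Sum>i=1..n+1. (if i = k then a k * (if j \<in> {1..n+1} then 1 else 0) else 0))
     = (if j \<in> {1..n+1} then a k else 0)"
    using assms by (simp only: sum.delta[OF finite_atLeastAtMost]) auto
  also have "(\<Sum>i=1..n+1. (if i = fl n k j \<and> j \<in> {1..n+1} \<and> j \<noteq> k then - a i else 0))
     = (if j \<in> {1..n+1} \<and> j \<noteq> k then - a (fl n k j) else 0)"
  proof (cases "j \<in> {1..n+1} \<and> j \<noteq> k")
    case True
    then show ?thesis using fl_props[OF assms, of j] by (simp add: sum.delta')
  next
    case False
    have "\<And>i. \<not> (i = fl n k j \<and> j \<in> {1..n+1} \<and> j \<noteq> k)" using False by blast
    then show ?thesis by (simp only: if_False if_not_P[OF False] sum.neutral_const)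
  qed
  finally show ?thesis by auto
qed


lemma psi_vecs: assumes "1 < k" "k < n" shows "psi n k a \<in> vecs (n+1)"
  using assms by (auto simp: vecs_def psi_formula)

lemma psi_invol: assumes "1 < k" "k < n" "a \<in> vecs (n+1)"
  shows "psi n k (psi n k a) = a"
proof (rule ext)
  fix j
  have kR: "k \<in> {1..n+1}" using assms by auto
  show "psi n k (psi n k a) j = a j"
  proof (cases "j \<in> {1..n+1}")
    case True
    show ?thesis
    proof (cases "j = k")
      case True then show ?thesis using kR by (simp add: psi_formula[OF assms(1,2)])
    next
      case False
      have "psi n k a (fl n k j) = a k - a j"
        using fl_props[OF assms(1,2) \<open>j \<in> _\<close> False] kR by (simp add: psi_formula[OF assms(1,2)])
      then show ?thesis using False True kR by (simp add: psi_formula[OF assms(1,2)])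
    qed
  next
    case False then show ?thesis using assms(3) by (subst psi_formula[OF assms(1,2)]) (auto simp: vecs_def)
  qed
qed

lemma psi_lin: assumes "1 < k" "k < n"
  shows "psi n k (\<lambda>j. r * a j + s * b j) = (\<lambda>j. r * psi n k a j + s * psi n k b j)"
  by (rule ext) (simp add: psi_formula[OF assms] algebra_simps)

lemma psi_scale: assumes "1 < k" "k < n"
  shows "psi n k (\<lambda>j. c * a j) = (\<lambda>j. c * psi n k a j)"
  by (rule ext) (simp add: psi_formula[OF assms] algebra_simps)

lemma psi_all: assumes "1 < k" "k < n"
  shows "psi n k (sum_form {1..n+1}) = coord k"
proof (rule ext)
  fix j
  show "psi n k (sum_form {1..n+1}) j = coord k j"
    using assms fl_props[OF assms, of j]
    by (auto simp: psi_formula[OF assms] sum_form_def coord_def)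
qed

lemma psi_sumform: assumes "1 < k" "k < n"
  shows "psi n k (sum_form I) j = (if j \<in> {1..n+1} then (if k \<in> I then 1 else 0) - (if j \<noteq> k \<and> fl n k j \<in> I then 1 else 0) else 0)"
  by (simp add: psi_formula[OF assms] sum_form_def)

lemma ker_scale: assumes "c \<noteq> 0" shows "ker_form m (\<lambda>j. c * a j) = ker_form m a"
proof -
  have "(\<Sum>i=1..m. c * a i * v i) = c * (\<Sum>i=1..m. a i * v i)" for v
    by (simp add: sum_distrib_left mult.assoc)
  then show ?thesis using assms by (simp add: ker_form_def)
qed

lemma ker_unique:
  assumes "a \<in> vecs m" "b \<in> vecs m" "a \<noteq> (\<lambda>j. 0)" "ker_form m a \<subseteq> ker_form m b"
  shows "\<exists>c. b = (\<lambda>j. c * a j)"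
proof -
  obtain p where p: "a p \<noteq> 0" using assms(3) by auto
  have pR: "p \<in> {1..m}" using p assms(1) unfolding vecs_def by blast
  define c where "c = b p / a p"
  have "b j = c * a j" for j
  proof (cases "j \<in> {1..m} \<and> j \<noteq> p")
    case True
    define v where "v = (\<lambda>i. if i = j then a p else if i = p then - a j else (0::rat))"
    have vv: "v \<in> vecs m" using True pR by (auto simp: v_def vecs_def)
    have sv: "(\<Sum>i=1..m. x i * v i) = x j * a p - x p * a j" for x
    proof -
      have "(\<Sum>i=1..m. x i * v i) = (\<Sum>i=1..m. (if i = j then x j * a p else 0) + (if i = p then - x p * a j else 0))"
        using True by (intro sum.cong) (auto simp: v_def)
      also have "\<dots> = x j * a p - x p * a j"
        using True pR by (simp add: sum.distrib sum.delta)
      finally show ?thesis .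
    qed
    have "v \<in> ker_form m a" using vv sv[of a] by (simp add: ker_form_def)
    then have "v \<in> ker_form m b" using assms(4) by blast
    then have "b j * a p - b p * a j = 0" using sv[of b] by (simp add: ker_form_def)
    then show ?thesis using p by (simp add: c_def field_simps)
  next
    case False
    then have "j \<notin> {1..m} \<or> j = p" by blast
    then show ?thesis
    proof
      assume "j \<notin> {1..m}" then show ?thesis using assms(1,2) by (simp add: vecs_def)
    next
      assume "j = p" then show ?thesis using p by (simp add: c_def)
    qed
  qed
  then show ?thesis by blast
qed


definition grel :: "nat set set \<Rightarrow> nat set \<Rightarrow> (nat \<times> nat) set" where
  "grel E I = {(a, b). a \<in> I \<and> b \<in> I \<and> {a, b} \<in> E}"

lemma ic_iff: "induced_connected E I \<longleftrightarrow> I \<noteq> {} \<and> (\<forall>u\<in>I. \<forall>v\<in>I. (u, v) \<in> (grel E I)\<^sup>*)"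
  by (simp add: induced_connected_def grel_def)

lemma grel_sym: assumes "(x, y) \<in> (grel E I)\<^sup>*" shows "(y, x) \<in> (grel E I)\<^sup>*"
proof -
  have c: "(grel E I)\<inverse> = grel E I" by (auto simp: grel_def insert_commute)
  have "(y, x) \<in> ((grel E I)\<inverse>)\<^sup>*" using assms by (simp add: rtrancl_converse)
  then show ?thesis using c by simp
qed

lemma star_conn: assumes "c \<in> J" "\<And>u. u \<in> J \<Longrightarrow> (u, c) \<in> (grel E J)\<^sup>*"
  shows "induced_connected E J"
  unfolding ic_iff using assms grel_sym by (metis empty_iff rtrancl_trans)

lemma edge_iff: "{a, b} \<in> almost_path_edges n k \<longleftrightarrow>
   (1 \<le> a \<and> a < n \<and> b = a + 1) \<or> (1 \<le> b \<and> b < n \<and> a = b + 1) \<or> (a = k \<and> b = n + 1) \<or> (a = n + 1 \<and> b = k)"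
  unfolding almost_path_edges_def by (auto simp: doubleton_eq_iff)


lemma fl_step: assumes "1 < k" "k < n" "1 \<le> y" "y < n" "y \<noteq> k" "y + 1 \<noteq> k"
  shows "fl n k y = fl n k (y+1) + 1 \<and> 1 \<le> fl n k (y+1) \<and> fl n k (y+1) < n"
proof (cases "y < k")
  case True
  then have "y + 1 < k" using assms by linarith
  then show ?thesis using True assms unfolding fl_def by (simp, linarith)
next
  case False
  then have "k < y" using assms by linarith
  then show ?thesis using False assms unfolding fl_def by (simp, linarith)
qed

lemma fl_edge: assumes "1 < k" "k < n" "y \<noteq> k" "z \<noteq> k"
  "{y, z} \<in> almost_path_edges n k"
  shows "{fl n k y, fl n k z} \<in> almost_path_edges n k"
proof -
  have "(1 \<le> y \<and> y < n \<and> z = y + 1) \<or> (1 \<le> z \<and> z < n \<and> y = z + 1)"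
    using assms(3,4,5) unfolding edge_iff by blast
  then show ?thesis
  proof
    assume h: "1 \<le> y \<and> y < n \<and> z = y + 1"
    then show ?thesis using fl_step[OF assms(1,2), of y] assms(3,4) unfolding edge_iff by auto
  next
    assume h: "1 \<le> z \<and> z < n \<and> y = z + 1"
    then show ?thesis using fl_step[OF assms(1,2), of z] assms(3,4) unfolding edge_iff by auto
  qed
qed

lemma case_notk:
  assumes "1 < k" "k < n" "I \<subseteq> {1..n+1}" "k \<notin> I" "induced_connected (almost_path_edges n k) I"
  shows "induced_connected (almost_path_edges n k) {j \<in> {1..n+1}. j \<noteq> k \<and> fl n k j \<in> I}"
    (is "induced_connected ?E ?J")
proof -
  have inJ: "fl n k i \<in> ?J" if "i \<in> I" for i
  proof -
    have "i \<in> {1..n+1}" "i \<noteq> k" using that assms(3,4) by auto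
    then show ?thesis using that fl_props[OF assms(1,2), of i] by simp
  qed
  have map: "(fl n k x, fl n k y) \<in> (grel ?E ?J)\<^sup>*" if "(x, y) \<in> (grel ?E I)\<^sup>*" for x y
    using that
  proof (induction rule: rtrancl_induct)
    case base then show ?case by simp
  next
    case (step y z)
    then have yz: "y \<in> I" "z \<in> I" "{y, z} \<in> ?E" by (auto simp: grel_def)
    have "{fl n k y, fl n k z} \<in> ?E"
      using fl_edge[OF assms(1,2) _ _ yz(3)] yz assms(4) by blast
    then have "(fl n k y, fl n k z) \<in> grel ?E ?J" using inJ yz by (auto simp: grel_def)
    then show ?case using step.IH by (meson rtrancl_into_rtrancl)
  qed
  obtain i where i: "i \<in> I" using assms(5) by (auto simp: ic_iff)
  show ?thesis unfolding ic_iff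
  proof (intro conjI ballI)
    show "?J \<noteq> {}" using inJ[OF i] by blast
  next
    fix u v assume u: "u \<in> ?J" and v: "v \<in> ?J"
    then have "(fl n k u, fl n k v) \<in> (grel ?E I)\<^sup>*" using assms(5) by (auto simp: ic_iff)
    then have "(fl n k (fl n k u), fl n k (fl n k v)) \<in> (grel ?E ?J)\<^sup>*" by (rule map)
    moreover have "fl n k (fl n k u) = u" "fl n k (fl n k v) = v"
      using u v fl_props(3)[OF assms(1,2)] by auto
    ultimately show "(u, v) \<in> (grel ?E ?J)\<^sup>*" by simp
  qed
qed


lemma reach_inv:
  assumes "(x, z) \<in> (grel E I)\<^sup>*" "P x"
    "\<And>a b. P a \<Longrightarrow> a \<in> I \<Longrightarrow> b \<in> I \<Longrightarrow> {a, b} \<in> E \<Longrightarrow> P b"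
  shows "P z"
  using assms(1,2)
proof (induction rule: rtrancl_induct)
  case (step y z) then show ?case using assms(3) by (auto simp: grel_def)
qed simp

lemma interval_low:
  assumes "1 < k" "k < n" "k \<in> I" "induced_connected (almost_path_edges n k) I"
    "x \<in> I" "x < k" "x \<le> y" "y \<le> k"
  shows "y \<in> I"
proof (rule ccontr)
  assume ny: "y \<notin> I"
  then have xy: "x < y" "y < k" using assms(3,5,7,8) by (auto simp: le_less)
  have "(x, k) \<in> (grel (almost_path_edges n k) I)\<^sup>*" using assms(3,4,5) by (auto simp: ic_iff)
  then have "k < y"
  proof (rule reach_inv[where P = "\<lambda>z. z < y"])
    show "x < y" by fact
  next
    fix a b assume h: "a < y" "a \<in> I" "b \<in> I" "{a, b} \<in> almost_path_edges n k"
    then have "b \<noteq> y" using ny by auto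
    then show "b < y" using h xy assms(2) unfolding edge_iff by auto
  qed
  then show False using xy by simp
qed

lemma interval_high:
  assumes "1 < k" "k < n" "k \<in> I" "induced_connected (almost_path_edges n k) I"
    "x \<in> I" "k < x" "x \<le> n" "k \<le> y" "y \<le> x"
  shows "y \<in> I"
proof (rule ccontr)
  assume ny: "y \<notin> I"
  then have xy: "y < x" "k < y" using assms(3,5,8,9) by (auto simp: le_less)
  have "(x, k) \<in> (grel (almost_path_edges n k) I)\<^sup>*" using assms(3,4,5) by (auto simp: ic_iff)
  then have "y < k \<and> k \<le> n"
  proof (rule reach_inv[where P = "\<lambda>z. y < z \<and> z \<le> n"])
    show "y < x \<and> x \<le> n" using xy assms by simp
  next
    fix a b assume h: "y < a \<and> a \<le> n" "a \<in> I" "b \<in> I" "{a, b} \<in> almost_path_edges n k"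
    then have "b \<noteq> y" using ny by auto
    then show "y < b \<and> b \<le> n" using h xy assms(2) unfolding edge_iff by auto
  qed
  then show False using xy by simp
qed

lemma path_up:
  assumes "a \<le> b" "\<And>y. a \<le> y \<Longrightarrow> y \<le> b \<Longrightarrow> y \<in> J" "1 \<le> a" "b \<le> n"
  shows "(a, b) \<in> (grel (almost_path_edges n k) J)\<^sup>*"
  using assms(1)
proof (induction b rule: dec_induct)
  case base then show ?case by simp
next
  case (step m)
  have "(m, Suc m) \<in> grel (almost_path_edges n k) J"
    using step.hyps assms unfolding grel_def edge_iff by auto
  then show ?case using step.IH by (meson rtrancl_into_rtrancl)
qed


lemma case_k:
  assumes "1 < k" "k < n" "I \<subseteq> {1..n+1}" "k \<in> I" "induced_connected (almost_path_edges n k) I"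
  shows "induced_connected (almost_path_edges n k) {j \<in> {1..n+1}. j = k \<or> fl n k j \<notin> I}"
    (is "induced_connected ?E ?J")
proof (rule star_conn)
  show kJ: "k \<in> ?J" using assms by auto
  fix u assume u: "u \<in> ?J"
  show "(u, k) \<in> (grel ?E ?J)\<^sup>*"
  proof (cases "u = k")
    case True then show ?thesis by simp
  next
    case False
    then have fu: "fl n k u \<notin> I" using u by auto
    consider "u < k" | "k < u \<and> u \<le> n" | "u = n + 1" using u False by fastforce
    then show ?thesis
    proof cases
      case 1
      have "y \<in> ?J" if "u \<le> y" "y \<le> k" for y
      proof (cases "y = k")
        case False
        then have yk: "y < k" using that by simp
        have "fl n k y \<notin> I"
        proof
          assume "fl n k y \<in> I"
          then have "k - y \<in> I" using yk by (simp add: fl_def)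
          then have "k - u \<in> I"
            using interval_low[OF assms(1,2,4,5), of "k - y" "k - u"] yk that u by auto
          then show False using fu 1 by (simp add: fl_def)
        qed
        then show ?thesis using that u assms(2) by auto
      qed (use kJ in simp)
      then show ?thesis using path_up[of u k ?J n] 1 u assms(2) by auto
    next
      case 2
      have "y \<in> ?J" if "k \<le> y" "y \<le> u" for y
      proof (cases "y = k")
        case False
        then have yk: "k < y" using that by simp
        have "fl n k y \<notin> I"
        proof
          assume "fl n k y \<in> I"
          then have "n + 1 + k - y \<in> I" using yk that 2 by (simp add: fl_def)
          then have "n + 1 + k - u \<in> I"
            using interval_high[OF assms(1,2,4,5), of "n + 1 + k - y" "n + 1 + k - u"] yk that 2 by simp
          then show False using fu 2 by (simp add: fl_def)
        qed
        then show ?thesis using that u 2 assms(1) by auto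
      qed (use kJ in simp)
      then have "(k, u) \<in> (grel ?E ?J)\<^sup>*" using path_up[of k u ?J n] 2 assms(1) by auto
      then show ?thesis by (rule grel_sym)
    next
      case 3
      have "(u, k) \<in> grel ?E ?J" using 3 u kJ unfolding grel_def edge_iff by auto
      then show ?thesis by blast
    qed
  qed
qed

lemma sumform_vecs: "I \<subseteq> {1..m} \<Longrightarrow> sum_form I \<in> vecs m"
  by (auto simp: sum_form_def vecs_def)

lemma sumform_nz: "I \<noteq> {} \<Longrightarrow> sum_form I \<noteq> (\<lambda>j. 0)"
  by (auto simp: sum_form_def fun_eq_iff)

lemma psi_conn:
  assumes "1 < k" "k < n" "I \<subseteq> {1..n+1}" "induced_connected (almost_path_edges n k) I"
  shows "\<exists>J c. J \<subseteq> {1..n+1} \<and> induced_connected (almost_path_edges n k) J \<and> c \<noteq> 0 \<and>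
     psi n k (sum_form I) = (\<lambda>j. c * sum_form J j)"
proof (cases "k \<in> I")
  case True
  let ?J = "{j \<in> {1..n+1}. j = k \<or> fl n k j \<notin> I}"
  have "psi n k (sum_form I) = (\<lambda>j. 1 * sum_form ?J j)"
    using True by (intro ext, subst psi_sumform[OF assms(1,2)], auto simp: sum_form_def)
  then show ?thesis using case_k[OF assms(1,2,3) True assms(4)] by (intro exI[of _ ?J] exI[of _ 1]) auto
next
  case False
  let ?J = "{j \<in> {1..n+1}. j \<noteq> k \<and> fl n k j \<in> I}"
  have "psi n k (sum_form I) = (\<lambda>j. (-1) * sum_form ?J j)"
    using False by (intro ext, subst psi_sumform[OF assms(1,2)], auto simp: sum_form_def)
  then show ?thesis using case_notk[OF assms(1,2,3) False assms(4)] by (intro exI[of _ ?J] exI[of _ "-1"]) auto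
qed


definition sig :: "nat \<Rightarrow> nat \<Rightarrow> (nat \<Rightarrow> rat) set \<Rightarrow> (nat \<Rightarrow> rat) set" where
  "sig n k H = ker_form (n+1) (psi n k (SOME a. a \<in> vecs (n+1) \<and> a \<noteq> (\<lambda>j. 0) \<and> ker_form (n+1) a = H))"

lemma sig_eq: assumes "1 < k" "k < n" "a \<in> vecs (n+1)" "a \<noteq> (\<lambda>j. 0)"
  shows "sig n k (ker_form (n+1) a) = ker_form (n+1) (psi n k a)"
proof -
  define a0 where "a0 = (SOME b. b \<in> vecs (n+1) \<and> b \<noteq> (\<lambda>j. 0) \<and> ker_form (n+1) b = ker_form (n+1) a)"
  have a0: "a0 \<in> vecs (n+1) \<and> a0 \<noteq> (\<lambda>j. 0) \<and> ker_form (n+1) a0 = ker_form (n+1) a"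
    unfolding a0_def by (rule someI[of _ a]) (use assms in auto)
  then obtain c where c: "a = (\<lambda>j. c * a0 j)" using ker_unique[of a0 "n+1" a] assms(3) by auto
  have "c \<noteq> 0" using c assms(4) by auto
  then have "ker_form (n+1) (psi n k a) = ker_form (n+1) (psi n k a0)"
    using c by (simp add: psi_scale[OF assms(1,2)] ker_scale)
  then show ?thesis by (simp add: sig_def a0_def)
qed

lemma csa_E: "H \<in> csa m E \<Longrightarrow> \<exists>I. I \<subseteq> {1..m} \<and> induced_connected E I \<and> H = ker_form m (sum_form I)"
  by (auto simp: csa_def)

lemma csa_I: "I \<subseteq> {1..m} \<Longrightarrow> induced_connected E I \<Longrightarrow> ker_form m (sum_form I) \<in> csa m E"
  by (auto simp: csa_def)

lemma sig_csa: assumes "1 < k" "k < n" "H \<in> csa (n+1) (almost_path_edges n k)"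
  shows "sig n k H \<in> csa (n+1) (almost_path_edges n k) \<and> sig n k (sig n k H) = H"
proof -
  obtain I where I: "I \<subseteq> {1..n+1}" "induced_connected (almost_path_edges n k) I" "H = ker_form (n+1) (sum_form I)"
    using csa_E[OF assms(3)] by blast
  obtain J c where J: "J \<subseteq> {1..n+1}" "induced_connected (almost_path_edges n k) J" "c \<noteq> 0"
     "psi n k (sum_form I) = (\<lambda>j. c * sum_form J j)"
    using psi_conn[OF assms(1,2) I(1,2)] by blast
  have Ine: "I \<noteq> {}" "J \<noteq> {}" using I(2) J(2) by (auto simp: ic_iff)
  have s1: "sig n k H = ker_form (n+1) (psi n k (sum_form I))"
    using I(3) sig_eq[OF assms(1,2) sumform_vecs[OF I(1)] sumform_nz[OF Ine(1)]] by simp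
  also have "\<dots> = ker_form (n+1) (sum_form J)" using J(3,4) ker_scale by simp
  finally have s2: "sig n k H = ker_form (n+1) (sum_form J)" .
  have nz: "psi n k (sum_form I) \<noteq> (\<lambda>j. 0)"
  proof
    assume "psi n k (sum_form I) = (\<lambda>j. 0)"
    then have "(\<lambda>j. c * sum_form J j) = (\<lambda>j. 0)" using J(4) by simp
    then have "sum_form J = (\<lambda>j. 0)" using J(3) by (auto simp: fun_eq_iff)
    then show False using sumform_nz[OF Ine(2)] by simp
  qed
  have "sig n k (sig n k H) = ker_form (n+1) (psi n k (psi n k (sum_form I)))"
    using s1 sig_eq[OF assms(1,2) psi_vecs[OF assms(1,2)] nz] by simp
  also have "\<dots> = H" using I(3) psi_invol[OF assms(1,2) sumform_vecs[OF I(1)]] by simp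
  finally show ?thesis using s2 csa_I[OF J(1,2)] by simp
qed

theorem proposition5p3:
  fixes n k :: nat
  assumes "1 < k" and "k < n"
  shows "(\<forall>a\<in>vecs (n+1). \<forall>b\<in>vecs (n+1). \<forall>r s :: rat.
            psi n k (\<lambda>j. r * a j + s * b j) = (\<lambda>j. r * psi n k a j + s * psi n k b j))
       \<and> bij_betw (psi n k) (vecs (n+1)) (vecs (n+1))
       \<and> (\<exists>\<sigma>. bij_betw \<sigma> (csa (n+1) (almost_path_edges n k)) (csa (n+1) (almost_path_edges n k))
              \<and> (\<forall>a\<in>vecs (n+1). a \<noteq> (\<lambda>j. 0) \<longrightarrow>
                   ker_form (n+1) a \<in> csa (n+1) (almost_path_edges n k) \<longrightarrow>
                   \<sigma> (ker_form (n+1) a) = ker_form (n+1) (psi n k a))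
              \<and> \<sigma> (ker_form (n+1) (sum_form {1..n+1})) = ker_form (n+1) (coord k))
       \<and> psi n k (sum_form {1..n+1}) = coord k"
proof (intro conjI)
  show "\<forall>a\<in>vecs (n+1). \<forall>b\<in>vecs (n+1). \<forall>r s :: rat.
            psi n k (\<lambda>j. r * a j + s * b j) = (\<lambda>j. r * psi n k a j + s * psi n k b j)"
    using psi_lin[OF assms] by blast
  show "bij_betw (psi n k) (vecs (n+1)) (vecs (n+1))"
    by (rule bij_betw_byWitness[where f' = "psi n k"])
       (use psi_invol[OF assms] psi_vecs[OF assms] in auto)
  show "psi n k (sum_form {1..n+1}) = coord k" by (rule psi_all[OF assms])
  show "\<exists>\<sigma>. bij_betw \<sigma> (csa (n+1) (almost_path_edges n k)) (csa (n+1) (almost_path_edges n k))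
              \<and> (\<forall>a\<in>vecs (n+1). a \<noteq> (\<lambda>j. 0) \<longrightarrow>
                   ker_form (n+1) a \<in> csa (n+1) (almost_path_edges n k) \<longrightarrow>
                   \<sigma> (ker_form (n+1) a) = ker_form (n+1) (psi n k a))
              \<and> \<sigma> (ker_form (n+1) (sum_form {1..n+1})) = ker_form (n+1) (coord k)"
  proof (intro exI[of _ "sig n k"] conjI ballI impI)
    show "bij_betw (sig n k) (csa (n+1) (almost_path_edges n k)) (csa (n+1) (almost_path_edges n k))"
      by (rule bij_betw_byWitness[where f' = "sig n k"]) (use sig_csa[OF assms] in auto)
    fix a assume "a \<in> vecs (n+1)" "a \<noteq> (\<lambda>j. 0)"
    then show "sig n k (ker_form (n+1) a) = ker_form (n+1) (psi n k a)" by (rule sig_eq[OF assms])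
  next
    have "{1..n+1} \<noteq> {}" by simp
    then show "sig n k (ker_form (n+1) (sum_form {1..n+1})) = ker_form (n+1) (coord k)"
      using sig_eq[OF assms sumform_vecs sumform_nz] psi_all[OF assms] by auto
  qed
qed

end
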